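(* Let $M$ be a $*$-left Ehresmann monoid with $M=\langle H\rangle_{(2)}$ for an atomic subset $H$. Let $h\in H$ and let $m=h_1h_2\cdots h_n$ be in $H$-canonical form. Then: (i) if $h_1\notin E$ and $h^*<h_1^+$, then $hh_1\cdots h_n$ is an $H$-canonical form of $hm$; (ii) if $h_1\in E$, or $h_1\notin E$ and $h^*\ge h_1^+$, then $hh_1\in H$ and $(hh_1)h_2\cdots h_n$ is an $H$-canonical form of $hm$; (iii) if $h_1\notin E$ and $h^*$, $h_1^+$ are incomparable, then $hh_1^+\in H$ and $(hh_1^+)h_1h_2\cdots h_n$ is an $H$-canonical form of $hm$.
   Context: A $*$-left Ehresmann monoid is a monoid $M$ with unary operations $+,*$ such that $x^+x=x$, $(x^+y^+)^+=x^+y^+$, $x^+y^+=y^+x^+$, $(xy)^+=(xy^+)^+$, $xx^*=x$, $(x^* )^*=x^*$, $x^*y^*=y^*x^*$, $(xy^* )^*y^*=(xy^* )^*$, $(x^* )^+=x^*$, $(x^+)^*=x^+$. Projections: $E=\{a^+\}=\{a^*\}$, ordered by $e\le f$ iff $ef=e$; $\sigma$ is the least monoid congruence containing $E\times E$; $\langle H\rangle_{(2)}$ is the subsemigroup generated by $H$. $H$ is atomic if: (H1) $E\subseteq H$; (H2) $h\in H,e\in E$ imply $he\in H$ and $(he)^*=h^*e$; (H3) if $h\in H$, $k\in H\setminus E$, $h^*\ge k^+$ then $hk\in H$ and $(hk)^*=k^*$; (H4) every $m\in M$ is $\sigma$-related to some $h\in H$; (H5) if $h,k,w\in H$, $hk\,\sigma\,w$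 and $k^*=w^*$, then some $u\in H$ has $u\,\sigma\,h$ and $u^*\ge k^+$. An expression $m=h_1\cdots h_n$ ($n\ge1$, $h_i\in H$) is in $H$-canonical form if $h_i^*<h_{i+1}^+$ for $1\le i<n$ and $h_i\notin E$ for $2\le i\le n$. *)

theory Defs
  imports Main
begin

text \<open>A *-left Ehresmann monoid: a monoid (type class monoid_mult) with unary
  operations pl (written x^+) and st (written x^*).\<close>

definition star_left_ehresmann :: "('a::monoid_mult \<Rightarrow> 'a) \<Rightarrow> ('a \<Rightarrow> 'a) \<Rightarrow> bool" where
  "star_left_ehresmann pl st \<longleftrightarrow>
     (\<forall>x. pl x * x = x) \<and>
     (\<forall>x y. pl (pl x * pl y) = pl x * pl y) \<and>
     (\<forall>x y. pl x * pl y = pl y * pl x) \<and>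
     (\<forall>x y. pl (x * y) = pl (x * pl y)) \<and>
     (\<forall>x. x * st x = x) \<and>
     (\<forall>x. st (st x) = st x) \<and>
     (\<forall>x y. st x * st y = st y * st x) \<and>
     (\<forall>x y. st (x * st y) * st y = st (x * st y)) \<and>
     (\<forall>x. pl (st x) = st x) \<and>
     (\<forall>x. st (pl x) = pl x)"

text \<open>Projections E = {a^+} (= {a^*} in such a monoid).\<close>
definition proj :: "('a \<Rightarrow> 'a) \<Rightarrow> 'a set" where
  "proj pl = range pl"

definition ple :: "'a::monoid_mult \<Rightarrow> 'a \<Rightarrow> bool" where
  "ple e f \<longleftrightarrow> e * f = e"

definition pless :: "'a::monoid_mult \<Rightarrow> 'a \<Rightarrow> bool" where
  "pless e f \<longleftrightarrow> ple e f \<and> e \<noteq> f"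

definition monoid_congruence :: "('a::monoid_mult \<times> 'a) set \<Rightarrow> bool" where
  "monoid_congruence R \<longleftrightarrow> equiv UNIV R \<and>
     (\<forall>a b c. (a, b) \<in> R \<longrightarrow> (c * a, c * b) \<in> R \<and> (a * c, b * c) \<in> R)"

definition sigma :: "('a::monoid_mult \<Rightarrow> 'a) \<Rightarrow> ('a \<times> 'a) set" where
  "sigma pl = \<Inter> {R. monoid_congruence R \<and> proj pl \<times> proj pl \<subseteq> R}"

inductive_set subsemigroup_gen :: "'a::monoid_mult set \<Rightarrow> 'a set" for H where
  base: "h \<in> H \<Longrightarrow> h \<in> subsemigroup_gen H"
| mult: "x \<in> subsemigroup_gen H \<Longrightarrow> y \<in> subsemigroup_gen H \<Longrightarrow> x * y \<in> subsemigroup_gen H"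

definition atomic :: "('a::monoid_mult \<Rightarrow> 'a) \<Rightarrow> ('a \<Rightarrow> 'a) \<Rightarrow> 'a set \<Rightarrow> bool" where
  "atomic pl st H \<longleftrightarrow>
     proj pl \<subseteq> H \<and>
     (\<forall>h\<in>H. \<forall>e\<in>proj pl. h * e \<in> H \<and> st (h * e) = st h * e) \<and>
     (\<forall>h\<in>H. \<forall>k\<in>H - proj pl. ple (pl k) (st h) \<longrightarrow> h * k \<in> H \<and> st (h * k) = st k) \<and>
     (\<forall>m. \<exists>h\<in>H. (m, h) \<in> sigma pl) \<and>
     (\<forall>h\<in>H. \<forall>k\<in>H. \<forall>w\<in>H. (h * k, w) \<in> sigma pl \<and> st k = st w \<longrightarrow>
        (\<exists>u\<in>H. (u, h) \<in> sigma pl \<and> ple (pl k) (st u)))"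

definition canonical :: "('a::monoid_mult \<Rightarrow> 'a) \<Rightarrow> ('a \<Rightarrow> 'a) \<Rightarrow> 'a set \<Rightarrow> 'a list \<Rightarrow> bool" where
  "canonical pl st H hs \<longleftrightarrow> hs \<noteq> [] \<and> set hs \<subseteq> H \<and>
     (\<forall>i. Suc i < length hs \<longrightarrow> pless (st (hs ! i)) (pl (hs ! Suc i))) \<and>
     (\<forall>i. 1 \<le> i \<and> i < length hs \<longrightarrow> hs ! i \<notin> proj pl)"

definition canonical_form_of :: "('a::monoid_mult \<Rightarrow> 'a) \<Rightarrow> ('a \<Rightarrow> 'a) \<Rightarrow> 'a set \<Rightarrow> 'a list \<Rightarrow> 'a \<Rightarrow> bool" where
  "canonical_form_of pl st H hs m \<longleftrightarrow> canonical pl st H hs \<and> m = prod_list hs"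

end

theory Submission
  imports Defs
begin

lemma canon_cons:
  "canonical pl st H (x # ys) \<longleftrightarrow> x \<in> H \<and> (ys \<noteq> [] \<longrightarrow>
     pless (st x) (pl (hd ys)) \<and> hd ys \<notin> proj pl \<and> canonical pl st H ys)"
proof (cases ys)
  case Nil then show ?thesis by (auto simp: canonical_def)
next
  case (Cons y zs)
  show ?thesis
  proof
    assume c: "canonical pl st H (x # ys)"
    have l0: "Suc 0 < length (x # ys)" using Cons by simp
    have "pless (st ((x # ys) ! 0)) (pl ((x # ys) ! Suc 0))"
      using c l0 unfolding canonical_def by blast
    then have a: "pless (st x) (pl y)" using Cons by simp
    have l1: "1 \<le> (1::nat) \<and> 1 < length (x # ys)" using Cons by simp
    have "(x # ys) ! 1 \<notin> proj pl" using c l1 unfolding canonical_def by blast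
    then have b: "y \<notin> proj pl" using Cons by simp
    have d: "canonical pl st H ys" unfolding canonical_def
    proof (intro conjI allI impI)
      show "ys \<noteq> []" using Cons by simp
      show "set ys \<subseteq> H" using c by (auto simp: canonical_def)
      fix i assume "Suc i < length ys"
      then have "Suc (Suc i) < length (x # ys)" by simp
      then have "pless (st ((x # ys) ! Suc i)) (pl ((x # ys) ! Suc (Suc i)))"
        using c unfolding canonical_def by blast
      then show "pless (st (ys ! i)) (pl (ys ! Suc i))" by simp
    next
      fix i assume "1 \<le> i \<and> i < length ys"
      then have "1 \<le> Suc i \<and> Suc i < length (x # ys)" by simp
      then have "(x # ys) ! Suc i \<notin> proj pl" using c unfolding canonical_def by blast
      then show "ys ! i \<notin> proj pl" by simp
    qed
    show "x \<in> H \<and> (ys \<noteq> [] \<longrightarrow> pless (st x) (pl (hd ys)) \<and> hd ys \<notin> proj pl \<and> canonical pl st H ys)"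
      using a b d c Cons by (auto simp: canonical_def)
  next
    assume r: "x \<in> H \<and> (ys \<noteq> [] \<longrightarrow> pless (st x) (pl (hd ys)) \<and> hd ys \<notin> proj pl \<and> canonical pl st H ys)"
    then have a: "pless (st x) (pl y)" "y \<notin> proj pl" "canonical pl st H ys" using Cons by auto
    show "canonical pl st H (x # ys)" unfolding canonical_def
    proof (intro conjI allI impI)
      show "x # ys \<noteq> []" by simp
      show "set (x # ys) \<subseteq> H" using r a(3) by (auto simp: canonical_def)
      fix i assume i: "Suc i < length (x # ys)"
      show "pless (st ((x # ys) ! i)) (pl ((x # ys) ! Suc i))"
      proof (cases i)
        case 0 then show ?thesis using a Cons by simp
      next
        case (Suc j) then show ?thesis using a(3) i by (auto simp: canonical_def)
      qed
    next
      fix i assume i: "1 \<le> i \<and> i < length (x # ys)"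
      show "(x # ys) ! i \<notin> proj pl"
      proof (cases i)
        case 0 then show ?thesis using i by simp
      next
        case (Suc j) then show ?thesis using a i Cons by (cases j) (auto simp: canonical_def)
      qed
    qed
  qed
qed

lemma proj_facts:
  assumes S: "star_left_ehresmann pl st" and e: "e \<in> proj pl"
  shows "st e = e" "pl e = e" "e * e = e"
proof -
  obtain x where x: "e = pl x" using e by (auto simp: proj_def)
  have a1: "\<forall>x. pl x * x = x" and a9: "\<forall>x. pl (st x) = st x" and a10: "\<forall>x. st (pl x) = pl x"
    using S by (auto simp: star_left_ehresmann_def)
  show s: "st e = e" using x a10 by simp
  show p: "pl e = e" using x a9 a10 by metis
  show "e * e = e" using p a1 by metis
qed

lemma st_proj: "star_left_ehresmann pl st \<Longrightarrow> st x \<in> proj pl"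
  unfolding star_left_ehresmann_def proj_def by (metis rangeI)

lemma pl_proj: "pl x \<in> proj pl"
  unfolding proj_def by simp

lemma comm: "star_left_ehresmann pl st \<Longrightarrow> e \<in> proj pl \<Longrightarrow> f \<in> proj pl \<Longrightarrow> e * f = f * e"
  unfolding star_left_ehresmann_def proj_def by auto

theorem mainTheorem8:
  fixes pl st :: "'a::monoid_mult \<Rightarrow> 'a" and H :: "'a set"
    and h h1 m :: 'a and hs :: "'a list"
  assumes "star_left_ehresmann pl st"
    and "atomic pl st H"
    and "subsemigroup_gen H = UNIV"
    and "h \<in> H"
    and "canonical_form_of pl st H (h1 # hs) m"
  shows "(h1 \<notin> proj pl \<and> pless (st h) (pl h1) \<longrightarrow>
            canonical_form_of pl st H (h # h1 # hs) (h * m))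
       \<and> (h1 \<in> proj pl \<or> (h1 \<notin> proj pl \<and> ple (pl h1) (st h)) \<longrightarrow>
            h * h1 \<in> H \<and> canonical_form_of pl st H ((h * h1) # hs) (h * m))
       \<and> (h1 \<notin> proj pl \<and> \<not> ple (st h) (pl h1) \<and> \<not> ple (pl h1) (st h) \<longrightarrow>
            h * pl h1 \<in> H \<and> canonical_form_of pl st H ((h * pl h1) # h1 # hs) (h * m))"
proof -
  note S = assms(1)
  have H2: "\<And>h e. h \<in> H \<Longrightarrow> e \<in> proj pl \<Longrightarrow> h * e \<in> H \<and> st (h * e) = st h * e"
    and H3: "\<And>h k. h \<in> H \<Longrightarrow> k \<in> H \<Longrightarrow> k \<notin> proj pl \<Longrightarrow> ple (pl k) (st h) \<Longrightarrow> h * k \<in> H \<and> st (h * k) = st k"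
    using assms(2) unfolding atomic_def by blast+
  have c: "canonical pl st H (h1 # hs)" and mm: "m = h1 * prod_list hs"
    using assms(5) by (auto simp: canonical_form_of_def)
  have h1H: "h1 \<in> H" and ctl: "hs \<noteq> [] \<Longrightarrow> pless (st h1) (pl (hd hs)) \<and> hd hs \<notin> proj pl \<and> canonical pl st H hs"
    using c canon_cons by blast+
  have sh: "st h \<in> proj pl" using st_proj[OF S] .
  have a1: "\<forall>x. pl x * x = x" using S by (auto simp: star_left_ehresmann_def)
  have P1: "h1 \<notin> proj pl \<and> pless (st h) (pl h1) \<longrightarrow>
            canonical_form_of pl st H (h # h1 # hs) (h * m)"
    using c assms(4) mm by (auto simp: canonical_form_of_def canon_cons[of _ _ _ h] mult.assoc)
  have P2: "h1 \<in> proj pl \<or> (h1 \<notin> proj pl \<and> ple (pl h1) (st h)) \<longrightarrow>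
            h * h1 \<in> H \<and> canonical_form_of pl st H ((h * h1) # hs) (h * m)"
  proof
    assume A: "h1 \<in> proj pl \<or> (h1 \<notin> proj pl \<and> ple (pl h1) (st h))"
    have X: "h * h1 \<in> H \<and> (hs \<noteq> [] \<longrightarrow> pless (st (h * h1)) (pl (hd hs)))"
    proof (cases "h1 \<in> proj pl")
      case True
      have hh: "h * h1 \<in> H" "st (h * h1) = st h * h1" using H2[OF assms(4) True] by auto
      have r: "pless (st (h * h1)) (pl (hd hs))" if ne: "hs \<noteq> []"
      proof -
        let ?f = "pl (hd hs)"
        have f: "?f \<in> proj pl" by (rule pl_proj)
        have p: "h1 * ?f = h1" "h1 \<noteq> ?f" using ctl[OF ne] proj_facts(1)[OF S True]
          by (auto simp: pless_def ple_def)
        have i1: "h1 * h1 = h1" using proj_facts(3)[OF S True] .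
        have l: "st h * h1 * ?f = st h * h1" using p by (simp add: mult.assoc)
        have "st h * h1 \<noteq> ?f"
        proof
          assume q: "st h * h1 = ?f"
          have "?f * h1 = st h * h1" using q i1 by (metis mult.assoc)
          moreover have "?f * h1 = h1" using comm[OF S f True] p by simp
          ultimately show False using q p by simp
        qed
        then show ?thesis using l hh by (simp add: pless_def ple_def)
      qed
      show ?thesis using hh r by blast
    next
      case False
      then have "ple (pl h1) (st h)" using A by blast
      then have "h * h1 \<in> H \<and> st (h * h1) = st h1" using H3[OF assms(4) h1H False] by blast
      then show ?thesis using ctl by auto
    qed
    have "canonical pl st H ((h * h1) # hs)" using X ctl canon_cons by blast
    then show "h * h1 \<in> H \<and> canonical_form_of pl st H ((h * h1) # hs) (h * m)"
      using X mm by (simp add: canonical_form_of_def mult.assoc)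
  qed
  have P3: "h1 \<notin> proj pl \<and> \<not> ple (st h) (pl h1) \<and> \<not> ple (pl h1) (st h) \<longrightarrow>
            h * pl h1 \<in> H \<and> canonical_form_of pl st H ((h * pl h1) # h1 # hs) (h * m)"
  proof
    assume A: "h1 \<notin> proj pl \<and> \<not> ple (st h) (pl h1) \<and> \<not> ple (pl h1) (st h)"
    let ?f = "pl h1"
    have f: "?f \<in> proj pl" by (rule pl_proj)
    have hh: "h * ?f \<in> H" "st (h * ?f) = st h * ?f" using H2[OF assms(4) f] by auto
    have i: "?f * ?f = ?f" using proj_facts(3)[OF S f] .
    have l: "st h * ?f * ?f = st h * ?f" using i by (simp add: mult.assoc)
    have ne: "st h * ?f \<noteq> ?f"
    proof
      assume "st h * ?f = ?f"
      then have "?f * st h = ?f" using comm[OF S sh f] by simp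
      then show False using A by (simp add: ple_def)
    qed
    have "pless (st (h * ?f)) ?f" using hh l ne by (simp add: pless_def ple_def)
    then have "canonical pl st H ((h * ?f) # h1 # hs)" using hh(1) A c canon_cons[of _ _ _ "h * ?f"] by auto
    moreover have "h * ?f * h1 = h * h1" using a1 by (simp add: mult.assoc)
    ultimately show "h * pl h1 \<in> H \<and> canonical_form_of pl st H ((h * pl h1) # h1 # hs) (h * m)"
      using hh mm a1 by (simp add: canonical_form_of_def mult.assoc[symmetric])
  qed
  show ?thesis using P1 P2 P3 by blast
qed

end
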